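(* For all $m,n\in\mathbb{N}$ with $m\le n$, the minimization problem defining $d_{m,n}$ admits an optimal transport plan $z\in\mathcal{F}_{m,n}$ that is simple, i.e. satisfies $z_{i,i}=\min\{\pi^m_i,\pi^n_i\}$ for all $i=0,\dots,m$.
   Context: Let $\mathbb{N}=\{0,1,2,\dots\}$. Fix a sequence $(\pi^n)_{n\in\mathbb{N}}$ where each $\pi^n=(\pi^n_i)_{i\in\mathbb{N}}$ is a probability distribution on $\mathbb{N}$ with support contained in $\{0,\dots,n\}$, and $\pi^n\ne\pi^m$ for $m\ne n$. Define reals $d_{m,n}$ for $m,n\in\mathbb{N}\cup\{-1\}$ recursively as follows: $d_{-1,-1}=0$, $d_{-1,j}=d_{j,-1}=1$ for $j\in\mathbb{N}$, and for $m,n\in\mathbb{N}$, $$d_{m,n}=\min_{z\in\mathcal{F}_{m,n}}\sum_{i=0}^m\sum_{j=0}^n z_{i,j}\,d_{i-1,j-1},$$ where $\mathcal{F}_{m,n}$ is the set of transport plans from $\pi^m$ to $\pi^n$, i.e. arrays $z=(z_{i,j})_{0\le i\le m,\,0\le j\le n}$ with $z_{i,j}\ge0$, $\sum_{j=0}^n z_{i,j}=\pi^m_i$ for all $i\le m$, and $\sum_{i=0}^m z_{i,j}=\pi^n_j$ for all $j\le n$. An optimal transport for $d_{m,n}$ is a minimizer of this problem. *)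

theory Defs
  imports Main "HOL.Real"
begin

text \<open>A sequence of distributions is modelled as pi :: nat => nat => real,
  pi n i being the mass of pi^n at i.\<close>

definition transport_plans :: "(nat \<Rightarrow> nat \<Rightarrow> real) \<Rightarrow> nat \<Rightarrow> nat \<Rightarrow> (nat \<Rightarrow> nat \<Rightarrow> real) set" where
  "transport_plans pi m n =
     {z. (\<forall>i\<le>m. \<forall>j\<le>n. 0 \<le> z i j)
       \<and> (\<forall>i\<le>m. (\<Sum>j\<le>n. z i j) = pi m i)
       \<and> (\<forall>j\<le>n. (\<Sum>i\<le>m. z i j) = pi n j)}"

text \<open>Shifted distance: dsh pi a b = d_{a-1,b-1}; index 0 plays the role of -1.\<close>
function dsh :: "(nat \<Rightarrow> nat \<Rightarrow> real) \<Rightarrow> nat \<Rightarrow> nat \<Rightarrow> real" where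
  "dsh pi 0 0 = 0"
| "dsh pi 0 (Suc j) = 1"
| "dsh pi (Suc i) 0 = 1"
| "dsh pi (Suc m) (Suc n) =
     Inf ((\<lambda>z. \<Sum>i\<le>m. \<Sum>j\<le>n. z i j * dsh pi i j) ` transport_plans pi m n)"
  by pat_completeness auto
termination
  by (relation "measure (\<lambda>(pi, a, b). a + b)") auto

definition tcost :: "(nat \<Rightarrow> nat \<Rightarrow> real) \<Rightarrow> nat \<Rightarrow> nat \<Rightarrow> (nat \<Rightarrow> nat \<Rightarrow> real) \<Rightarrow> real" where
  "tcost pi m n z = (\<Sum>i\<le>m. \<Sum>j\<le>n. z i j * dsh pi i j)"

definition dist_d :: "(nat \<Rightarrow> nat \<Rightarrow> real) \<Rightarrow> nat \<Rightarrow> nat \<Rightarrow> real" where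
  "dist_d pi m n = dsh pi (Suc m) (Suc n)"

end

theory Submission
  imports Defs Complex_Main
begin

lemma finite_bw:
  fixes g :: "nat \<Rightarrow> 'a \<Rightarrow> real"
  assumes "finite S" "\<And>k a. a \<in> S \<Longrightarrow> \<bar>g k a\<bar> \<le> B"
  shows "\<exists>r. strict_mono r \<and> (\<forall>a\<in>S. convergent (\<lambda>k. g (r k) a))"
  using assms
proof (induction S rule: finite_induct)
  case empty
  show ?case by (intro exI[of _ id]) (auto simp: strict_mono_def)
next
  case (insert x S)
  then obtain r where r: "strict_mono r" "\<forall>a\<in>S. convergent (\<lambda>k. g (r k) a)" by auto
  obtain s where s: "strict_mono s" "monoseq (\<lambda>k. g (r (s k)) x)"
    using seq_monosub[of "\<lambda>k. g (r k) x"] by auto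
  have bx: "\<And>k. \<bar>g k x\<bar> \<le> B" using insert.prems by simp
  have "Bseq (\<lambda>k. g (r (s k)) x)"
    by (rule BseqI'[of _ B]) (simp add: bx)
  then have cx: "convergent (\<lambda>k. g (r (s k)) x)"
    using s(2) by (rule Bseq_monoseq_convergent)
  have "convergent (\<lambda>k. g (r (s k)) a)" if "a \<in> S" for a
  proof -
    from r(2) that have "convergent (\<lambda>k. g (r k) a)" by blast
    then obtain l where "(\<lambda>k. g (r k) a) \<longlonglongrightarrow> l" unfolding convergent_def by blast
    from LIMSEQ_subseq_LIMSEQ[OF this s(1)] have "(\<lambda>k. g (r (s k)) a) \<longlonglongrightarrow> l"
      by (simp add: o_def)
    then show ?thesis unfolding convergent_def by blast
  qed
  then have "\<forall>a\<in>insert x S. convergent (\<lambda>k. g ((r \<circ> s) k) a)"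
    using cx by (simp add: o_def)
  moreover have "strict_mono (r \<circ> s)" by (rule strict_mono_o[OF r(1) s(1)])
  ultimately show ?case by blast
qed

lemma exists_min:
  fixes P :: "(nat \<Rightarrow> nat \<Rightarrow> real) set" and f :: "(nat \<Rightarrow> nat \<Rightarrow> real) \<Rightarrow> real"
  assumes ne: "P \<noteq> {}"
    and bnd: "\<And>z i j. z \<in> P \<Longrightarrow> i \<le> m \<Longrightarrow> j \<le> n \<Longrightarrow> \<bar>z i j\<bar> \<le> B"
    and low: "\<And>z. z \<in> P \<Longrightarrow> C \<le> f z"
    and closed: "\<And>zs z. (\<forall>k. zs k \<in> P) \<Longrightarrow> (\<forall>i\<le>m. \<forall>j\<le>n. (\<lambda>k. zs k i j) \<longlonglongrightarrow> z i j) \<Longrightarrow> z \<in> P"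
    and fcont: "\<And>zs z. (\<forall>i\<le>m. \<forall>j\<le>n. (\<lambda>k. zs k i j) \<longlonglongrightarrow> z i j) \<Longrightarrow> (\<lambda>k. f (zs k)) \<longlonglongrightarrow> f z"
  shows "\<exists>z\<in>P. \<forall>z'\<in>P. f z \<le> f z'"
proof -
  define L where "L = Inf (f ` P)"
  have bb: "bdd_below (f ` P)" using low by (auto simp: bdd_below_def)
  have "\<exists>z. z \<in> P \<and> f z < L + inverse (real (Suc k))" for k
  proof -
    have "L < L + inverse (real (Suc k))" by simp
    from cInf_lessD[OF _ this[unfolded L_def]] ne show ?thesis unfolding L_def by auto
  qed
  then obtain zs where zs: "\<And>k. zs k \<in> P" "\<And>k. f (zs k) < L + inverse (real (Suc k))"
    by metis
  obtain r where r: "strict_mono r" "\<forall>a\<in>{..m}\<times>{..n}. convergent (\<lambda>k. (\<lambda>k (i,j). zs k i j) (r k) a)"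
  proof -
    have "\<bar>(\<lambda>k (i,j). zs k i j) k a\<bar> \<le> B" if "a \<in> {..m}\<times>{..n}" for k a
      using that bnd[OF zs(1)] by (cases a) auto
    from finite_bw[of "{..m}\<times>{..n}" "\<lambda>k (i,j). zs k i j" B, OF _ this] show ?thesis
      using that by blast
  qed
  define z where "z i j = lim (\<lambda>k. zs (r k) i j)" for i j
  have lim: "\<forall>i\<le>m. \<forall>j\<le>n. (\<lambda>k. (zs (r k)) i j) \<longlonglongrightarrow> z i j"
    using r(2) unfolding z_def by (auto simp: convergent_LIMSEQ_iff)
  have zP: "z \<in> P" using closed[of "\<lambda>k. zs (r k)" z] lim zs(1) by auto
  have fl: "(\<lambda>k. f (zs (r k))) \<longlonglongrightarrow> f z" using fcont lim by auto
  have up: "(\<lambda>k. L + inverse (real (Suc k))) \<longlonglongrightarrow> L + 0"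
    by (intro tendsto_add tendsto_const LIMSEQ_inverse_real_of_nat)
  have "f (zs (r k)) \<le> L + inverse (real (Suc k))" for k
  proof -
    have "k \<le> r k" using seq_suble[OF r(1)] .
    then have "inverse (real (Suc (r k))) \<le> inverse (real (Suc k))"
      by (simp add: le_imp_inverse_le)
    with zs(2)[of "r k"] show ?thesis by linarith
  qed
  then have "f z \<le> L + 0" using LIMSEQ_le[OF fl up] by auto
  moreover have "L \<le> f z'" if "z' \<in> P" for z'
    unfolding L_def using bb that by (auto intro: cInf_lower)
  ultimately have "\<forall>z'\<in>P. f z \<le> f z'" by (auto intro: order_trans)
  with zP show ?thesis by blast
qed



lemma dsh_Suc: "dsh p (Suc m) (Suc n) = Inf (tcost p m n ` transport_plans p m n)"
  by (simp add: tcost_def[abs_def])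

declare dsh.simps(4)[simp del]

definition ind :: "nat \<Rightarrow> nat \<Rightarrow> nat \<Rightarrow> nat \<Rightarrow> real" where
  "ind x y a b = (if a = x \<and> b = y then 1 else 0)"

lemma ind_row: "y \<le> n \<Longrightarrow> (\<Sum>b\<le>n. ind x y a b) = (if a = x then 1 else 0)"
  unfolding ind_def by (cases "a = x") auto

lemma ind_col: "x \<le> m \<Longrightarrow> (\<Sum>a\<le>m. ind x y a b) = (if b = y then 1 else 0)"
  unfolding ind_def by (cases "b = y") auto

lemma ind_diag: "(\<Sum>a\<le>m. ind x y a a) = (if x = y \<and> x \<le> m then 1 else 0)"
  unfolding ind_def by (cases "x = y") (auto intro!: sum.neutral)

lemma ind_cost:
  assumes "x \<le> m" "y \<le> n"
  shows "(\<Sum>a\<le>m. \<Sum>b\<le>n. ind x y a b * c a b) = c x y"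
proof -
  have "(\<Sum>a\<le>m. \<Sum>b\<le>n. ind x y a b * c a b) = (\<Sum>a\<le>m. if a = x then c x y else 0)"
  proof (intro sum.cong refl)
    fix a assume "a \<in> {..m}"
    show "(\<Sum>b\<le>n. ind x y a b * c a b) = (if a = x then c x y else 0)"
    proof (cases "a = x")
      case True
      have "(\<Sum>b\<le>n. ind x y a b * c a b) = (\<Sum>b\<le>n. if b = y then c x y else 0)"
        unfolding ind_def using True by (intro sum.cong) auto
      then show ?thesis using True assms by simp
    next
      case False
      then show ?thesis unfolding ind_def by simp
    qed
  qed
  also have "\<dots> = c x y" using assms by simp
  finally show ?thesis .
qed

context
  fixes pi :: "nat \<Rightarrow> nat \<Rightarrow> real"
  assumes nonneg: "\<And>k i. 0 \<le> pi k i"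
    and total: "\<And>k. (\<Sum>i\<le>k. pi k i) = 1"
begin

lemma prod_plan: "(\<lambda>i j. pi m i * pi n j) \<in> transport_plans pi m n"
  unfolding transport_plans_def
  by (auto simp: sum_distrib_left[symmetric] sum_distrib_right[symmetric] total nonneg)

lemma plans_ne: "transport_plans pi m n \<noteq> {}"
  using prod_plan by blast

lemma pi_le1: "i \<le> k \<Longrightarrow> pi k i \<le> 1"
  using member_le_sum[of i "{..k}" "pi k"] nonneg total by auto

lemma plan_bound:
  assumes "z \<in> transport_plans pi m n" "i \<le> m" "j \<le> n"
  shows "0 \<le> z i j" "z i j \<le> 1"
proof -
  show "0 \<le> z i j" using assms unfolding transport_plans_def by auto
  have "z i j \<le> (\<Sum>j\<le>n. z i j)"
    by (rule member_le_sum) (use assms in \<open>auto simp: transport_plans_def\<close>)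
  also have "\<dots> = pi m i" using assms unfolding transport_plans_def by auto
  also have "\<dots> \<le> 1" using pi_le1 assms by auto
  finally show "z i j \<le> 1" .
qed

lemma dsh_nonneg: "0 \<le> dsh pi a b"
proof (induction "a+b" arbitrary: a b rule: less_induct)
  case less
  show ?case
  proof (cases a)
    case 0 then show ?thesis by (cases b) auto
  next
    case (Suc m)
    show ?thesis
    proof (cases b)
      case 0 then show ?thesis using Suc by auto
    next
      case (Suc n)
      have "0 \<le> tcost pi m n z" if "z \<in> transport_plans pi m n" for z
        unfolding tcost_def
        using that less \<open>a = Suc m\<close> Suc
        by (intro sum_nonneg mult_nonneg_nonneg) (auto simp: transport_plans_def)
      then show ?thesis unfolding \<open>a = Suc m\<close> Suc dsh_Suc using plans_ne
        by (intro cInf_greatest) auto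
    qed
  qed
qed

lemma tcost_nonneg: "z \<in> transport_plans pi m n \<Longrightarrow> 0 \<le> tcost pi m n z"
  unfolding tcost_def
  by (intro sum_nonneg mult_nonneg_nonneg dsh_nonneg) (auto simp: transport_plans_def)

lemma plans_closed:
  assumes "\<forall>k. zs k \<in> transport_plans pi m n"
    and "\<forall>i\<le>m. \<forall>j\<le>n. (\<lambda>k. zs k i j) \<longlonglongrightarrow> z i j"
  shows "z \<in> transport_plans pi m n"
  unfolding transport_plans_def
proof (intro CollectI conjI allI impI)
  fix i j assume "i \<le> m" "j \<le> n"
  then show "0 \<le> z i j"
    using assms by (intro LIMSEQ_le_const[of "\<lambda>k. zs k i j"]) (auto simp: transport_plans_def)
next
  fix i assume i: "i \<le> m"
  have "(\<lambda>k. \<Sum>j\<le>n. zs k i j) \<longlonglongrightarrow> (\<Sum>j\<le>n. z i j)"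
    using assms i by (intro tendsto_sum) auto
  moreover have "(\<lambda>k. \<Sum>j\<le>n. zs k i j) = (\<lambda>k. pi m i)"
    using assms i by (auto simp: transport_plans_def)
  ultimately show "(\<Sum>j\<le>n. z i j) = pi m i"
    using LIMSEQ_unique tendsto_const by metis
next
  fix j assume j: "j \<le> n"
  have "(\<lambda>k. \<Sum>i\<le>m. zs k i j) \<longlonglongrightarrow> (\<Sum>i\<le>m. z i j)"
    using assms j by (intro tendsto_sum) auto
  moreover have "(\<lambda>k. \<Sum>i\<le>m. zs k i j) = (\<lambda>k. pi n j)"
    using assms j by (auto simp: transport_plans_def)
  ultimately show "(\<Sum>i\<le>m. z i j) = pi n j"
    using LIMSEQ_unique tendsto_const by metis
qed

lemma tcost_cont:
  assumes "\<forall>i\<le>m. \<forall>j\<le>n. (\<lambda>k. zs k i j) \<longlonglongrightarrow> z i j"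
  shows "(\<lambda>k. tcost pi m n (zs k)) \<longlonglongrightarrow> tcost pi m n z"
  unfolding tcost_def using assms
  by (intro tendsto_sum tendsto_mult_right) auto

lemma exists_opt:
  "\<exists>z\<in>transport_plans pi m n. \<forall>z'\<in>transport_plans pi m n. tcost pi m n z \<le> tcost pi m n z'"
  apply (rule exists_min[where m=m and n=n and B=1 and C=0])
  using plans_ne plan_bound tcost_nonneg plans_closed tcost_cont by (auto simp: abs_le_iff)

lemma dsh_opt:
  assumes "z \<in> transport_plans pi m n" "\<forall>z'\<in>transport_plans pi m n. tcost pi m n z \<le> tcost pi m n z'"
  shows "dsh pi (Suc m) (Suc n) = tcost pi m n z"
  unfolding dsh_Suc using assms by (intro cInf_eq_minimum) auto

lemma dsh_le: "z \<in> transport_plans pi m n \<Longrightarrow> dsh pi (Suc m) (Suc n) \<le> tcost pi m n z"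
  unfolding dsh_Suc using tcost_nonneg
  by (intro cInf_lower) (auto simp: bdd_below_def)

lemma plan_total: "z \<in> transport_plans pi m n \<Longrightarrow> (\<Sum>i\<le>m. \<Sum>j\<le>n. z i j) = 1"
  by (simp add: transport_plans_def total)

lemma dsh_le1: "dsh pi a b \<le> 1"
proof (induction "a+b" arbitrary: a b rule: less_induct)
  case less
  show ?case
  proof (cases a)
    case 0 then show ?thesis by (cases b) auto
  next
    case (Suc m)
    show ?thesis
    proof (cases b)
      case 0 then show ?thesis using Suc by auto
    next
      case (Suc n)
      define z where "z = (\<lambda>i j. pi m i * pi n j)"
      have zp: "z \<in> transport_plans pi m n" unfolding z_def by (rule prod_plan)
      have "tcost pi m n z \<le> (\<Sum>i\<le>m. \<Sum>j\<le>n. z i j * 1)"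
        unfolding tcost_def
        using less \<open>a = Suc m\<close> Suc plan_bound[OF zp]
        by (intro sum_mono mult_left_mono) auto
      also have "\<dots> = 1" using plan_total[OF zp] by simp
      finally show ?thesis unfolding \<open>a = Suc m\<close> Suc using dsh_le[OF zp] by linarith
    qed
  qed
qed

lemma dsh_diag: "dsh pi a a = 0"
proof (induction a rule: less_induct)
  case (less a)
  show ?case
  proof (cases a)
    case 0 then show ?thesis by simp
  next
    case (Suc m)
    define z where "z = (\<lambda>i j. if i = j then pi m i else 0)"
    have zp: "z \<in> transport_plans pi m m"
      unfolding z_def transport_plans_def by (auto simp: nonneg)
    have inner: "(\<Sum>j\<le>m. (if i = j then pi m i else 0) * dsh pi i j) = 0" if i: "i \<in> {..m}" for i
    proof -
      have "(\<Sum>j\<le>m. (if i = j then pi m i else 0) * dsh pi i j) = (\<Sum>j\<le>m. if i = j then pi m i * dsh pi i i else 0)"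
        by (rule sum.cong) auto
      also have "\<dots> = pi m i * dsh pi i i"
        using i by (simp add: sum.delta)
      also have "\<dots> = 0" using less[of i] i Suc by simp
      finally show ?thesis .
    qed
    have "tcost pi m m z = 0"
      unfolding tcost_def z_def using inner by (intro sum.neutral) blast
    then show ?thesis using dsh_le[OF zp] dsh_nonneg[of "Suc m" "Suc m"] Suc by simp
  qed
qed

lemma col_zero:
  assumes "z \<in> transport_plans pi m n" "i \<le> m" "j \<le> n" "pi n j = 0"
  shows "z i j = 0"
proof -
  have "(\<Sum>i\<le>m. z i j) = 0" using assms unfolding transport_plans_def by auto
  moreover have "\<forall>i\<in>{..m}. 0 \<le> z i j" using assms unfolding transport_plans_def by auto
  ultimately show ?thesis using sum_nonneg_eq_0_iff[of "{..m}" "\<lambda>i. z i j"] assms(2) by auto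
qed

lemma row_zero:
  assumes "z \<in> transport_plans pi m n" "i \<le> m" "j \<le> n" "pi m i = 0"
  shows "z i j = 0"
proof -
  have "(\<Sum>j\<le>n. z i j) = 0" using assms unfolding transport_plans_def by auto
  moreover have "\<forall>j\<in>{..n}. 0 \<le> z i j" using assms unfolding transport_plans_def by auto
  ultimately show ?thesis using sum_nonneg_eq_0_iff[of "{..n}" "\<lambda>j. z i j"] assms(3) by auto
qed

lemma glue:
  assumes z1: "z1 \<in> transport_plans pi l m" and z2: "z2 \<in> transport_plans pi m n"
    and tri: "\<And>i j k. i \<le> l \<Longrightarrow> j \<le> m \<Longrightarrow> k \<le> n \<Longrightarrow> dsh pi i k \<le> dsh pi i j + dsh pi j k"
  shows "dsh pi (Suc l) (Suc n) \<le> tcost pi l m z1 + tcost pi m n z2"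
proof -
  define q where "q i j k = (if pi m j = 0 then 0 else z1 i j * z2 j k / pi m j)" for i j k
  define w where "w i k = (\<Sum>j\<le>m. q i j k)" for i k
  have z1r: "\<And>i. i \<le> l \<Longrightarrow> (\<Sum>j\<le>m. z1 i j) = pi l i"
   and z1c: "\<And>j. j \<le> m \<Longrightarrow> (\<Sum>i\<le>l. z1 i j) = pi m j"
   and z1n: "\<And>i j. i \<le> l \<Longrightarrow> j \<le> m \<Longrightarrow> 0 \<le> z1 i j"
    using z1 unfolding transport_plans_def by auto
  have z2r: "\<And>j. j \<le> m \<Longrightarrow> (\<Sum>k\<le>n. z2 j k) = pi m j"
   and z2c: "\<And>k. k \<le> n \<Longrightarrow> (\<Sum>j\<le>m. z2 j k) = pi n k"
   and z2n: "\<And>j k. j \<le> m \<Longrightarrow> k \<le> n \<Longrightarrow> 0 \<le> z2 j k"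
    using z2 unfolding transport_plans_def by auto
  have qn: "0 \<le> q i j k" if "i \<le> l" "j \<le> m" "k \<le> n" for i j k
    unfolding q_def using that z1n z2n nonneg by auto
  have rowq: "(\<Sum>k\<le>n. q i j k) = z1 i j" if "i \<le> l" "j \<le> m" for i j
  proof (cases "pi m j = 0")
    case True then show ?thesis unfolding q_def using col_zero[OF z1 that] by simp
  next
    case False
    have "(\<Sum>k\<le>n. q i j k) = (\<Sum>k\<le>n. z1 i j * z2 j k / pi m j)"
      unfolding q_def using False by simp
    also have "\<dots> = z1 i j * (\<Sum>k\<le>n. z2 j k) / pi m j"
      by (simp add: sum_distrib_left sum_divide_distrib)
    also have "\<dots> = z1 i j" using z2r[OF that(2)] False by simp
    finally show ?thesis .
  qed
  have colq: "(\<Sum>i\<le>l. q i j k) = z2 j k" if "j \<le> m" "k \<le> n" for j k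
  proof (cases "pi m j = 0")
    case True then show ?thesis unfolding q_def using row_zero[OF z2 that] by simp
  next
    case False
    have "(\<Sum>i\<le>l. q i j k) = (\<Sum>i\<le>l. z1 i j * z2 j k / pi m j)"
      unfolding q_def using False by simp
    also have "\<dots> = (\<Sum>i\<le>l. z1 i j) * z2 j k / pi m j"
      by (simp add: sum_distrib_right sum_divide_distrib)
    also have "\<dots> = z2 j k" using z1c[OF that(1)] False by simp
    finally show ?thesis .
  qed
  have wp: "w \<in> transport_plans pi l n"
    unfolding transport_plans_def
  proof (intro CollectI conjI allI impI)
    fix i k assume "i \<le> l" "k \<le> n"
    then show "0 \<le> w i k" unfolding w_def using qn by (intro sum_nonneg) auto
  next
    fix i assume i: "i \<le> l"
    have "(\<Sum>k\<le>n. w i k) = (\<Sum>j\<le>m. \<Sum>k\<le>n. q i j k)" unfolding w_def by (rule sum.swap)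
    also have "\<dots> = (\<Sum>j\<le>m. z1 i j)" using rowq i by (intro sum.cong) auto
    finally show "(\<Sum>k\<le>n. w i k) = pi l i" using z1r i by simp
  next
    fix k assume k: "k \<le> n"
    have "(\<Sum>i\<le>l. w i k) = (\<Sum>j\<le>m. \<Sum>i\<le>l. q i j k)" unfolding w_def by (rule sum.swap)
    also have "\<dots> = (\<Sum>j\<le>m. z2 j k)" using colq k by (intro sum.cong) auto
    finally show "(\<Sum>i\<le>l. w i k) = pi n k" using z2c k by simp
  qed
  let ?c = "dsh pi"
  have "tcost pi l n w = (\<Sum>i\<le>l. \<Sum>k\<le>n. \<Sum>j\<le>m. q i j k * ?c i k)"
    unfolding tcost_def w_def by (simp add: sum_distrib_right)
  also have "\<dots> \<le> (\<Sum>i\<le>l. \<Sum>k\<le>n. \<Sum>j\<le>m. q i j k * ?c i j + q i j k * ?c j k)"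
    by (intro sum_mono) (auto simp: distrib_left[symmetric] intro!: mult_left_mono tri qn)
  also have "\<dots> = (\<Sum>i\<le>l. \<Sum>k\<le>n. \<Sum>j\<le>m. q i j k * ?c i j) + (\<Sum>i\<le>l. \<Sum>k\<le>n. \<Sum>j\<le>m. q i j k * ?c j k)"
    by (simp add: sum.distrib)
  also have "(\<Sum>i\<le>l. \<Sum>k\<le>n. \<Sum>j\<le>m. q i j k * ?c i j) = tcost pi l m z1"
  proof -
    have "(\<Sum>i\<le>l. \<Sum>k\<le>n. \<Sum>j\<le>m. q i j k * ?c i j) = (\<Sum>i\<le>l. \<Sum>j\<le>m. \<Sum>k\<le>n. q i j k * ?c i j)"
      by (intro sum.cong refl sum.swap)
    also have "\<dots> = (\<Sum>i\<le>l. \<Sum>j\<le>m. (\<Sum>k\<le>n. q i j k) * ?c i j)"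
      by (simp add: sum_distrib_right)
    also have "\<dots> = tcost pi l m z1"
      unfolding tcost_def using rowq by (intro sum.cong refl) auto
    finally show ?thesis .
  qed
  also have "(\<Sum>i\<le>l. \<Sum>k\<le>n. \<Sum>j\<le>m. q i j k * ?c j k) = tcost pi m n z2"
  proof -
    have "(\<Sum>i\<le>l. \<Sum>k\<le>n. \<Sum>j\<le>m. q i j k * ?c j k) = (\<Sum>i\<le>l. \<Sum>j\<le>m. \<Sum>k\<le>n. q i j k * ?c j k)"
      by (intro sum.cong refl sum.swap)
    also have "\<dots> = (\<Sum>j\<le>m. \<Sum>i\<le>l. \<Sum>k\<le>n. q i j k * ?c j k)"
      by (rule sum.swap)
    also have "\<dots> = (\<Sum>j\<le>m. \<Sum>k\<le>n. \<Sum>i\<le>l. q i j k * ?c j k)"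
      by (intro sum.cong refl sum.swap)
    also have "\<dots> = (\<Sum>j\<le>m. \<Sum>k\<le>n. (\<Sum>i\<le>l. q i j k) * ?c j k)"
      by (simp add: sum_distrib_right)
    also have "\<dots> = tcost pi m n z2"
      unfolding tcost_def using colq by (intro sum.cong refl) auto
    finally show ?thesis .
  qed
  finally show ?thesis using dsh_le[OF wp] by linarith
qed

lemma dsh_tri: "dsh pi a c \<le> dsh pi a b + dsh pi b c"
proof (induction "a+b+c" arbitrary: a b c rule: less_induct)
  case less
  show ?case
  proof (cases "a = 0 \<or> b = 0 \<or> c = 0")
    case True
    then show ?thesis using dsh_le1[of a c] dsh_nonneg[of a b] dsh_nonneg[of b c] dsh_nonneg[of a c]
      by (cases a; cases b; cases c) auto
  next
    case False
    then obtain l m n where lmn: "a = Suc l" "b = Suc m" "c = Suc n"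
      by (metis not0_implies_Suc)
    obtain z1 where z1: "z1 \<in> transport_plans pi l m" "\<forall>z'\<in>transport_plans pi l m. tcost pi l m z1 \<le> tcost pi l m z'"
      using exists_opt by blast
    obtain z2 where z2: "z2 \<in> transport_plans pi m n" "\<forall>z'\<in>transport_plans pi m n. tcost pi m n z2 \<le> tcost pi m n z'"
      using exists_opt by blast
    have "dsh pi (Suc l) (Suc n) \<le> tcost pi l m z1 + tcost pi m n z2"
      by (rule glue[OF z1(1) z2(1)]) (rule less, use lmn in auto)
    then show ?thesis using dsh_opt[OF z1] dsh_opt[OF z2] lmn by simp
  qed
qed

lemma main:
  assumes mn: "m \<le> n"
  shows "\<exists>z \<in> transport_plans pi m n.
           (\<forall>z' \<in> transport_plans pi m n. tcost pi m n z \<le> tcost pi m n z')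
         \<and> (\<forall>i\<le>m. z i i = min (pi m i) (pi n i))"
proof -
  let ?T = "transport_plans pi m n"
  define P where "P = {z \<in> ?T. \<forall>z'\<in>?T. tcost pi m n z \<le> tcost pi m n z'}"
  let ?f = "\<lambda>z::nat\<Rightarrow>nat\<Rightarrow>real. - (\<Sum>i\<le>m. z i i)"
  have "\<exists>z\<in>P. \<forall>z'\<in>P. ?f z \<le> ?f z'"
  proof (rule exists_min[where m=m and n=n and B=1 and C="- real (Suc m)"])
    show "P \<noteq> {}" unfolding P_def using exists_opt by blast
  next
    fix z i j assume "z \<in> P" "i \<le> m" "j \<le> n"
    then show "\<bar>z i j\<bar> \<le> 1" unfolding P_def using plan_bound[of z m n i j] by auto
  next
    fix z assume z: "z \<in> P"
    have "(\<Sum>i\<le>m. z i i) \<le> (\<Sum>i\<le>m. 1)"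
      using z mn plan_bound[of z m n] unfolding P_def by (intro sum_mono) auto
    then show "- real (Suc m) \<le> ?f z" by simp
  next
    fix zs z assume zs: "\<forall>k. zs k \<in> P" and lim: "\<forall>i\<le>m. \<forall>j\<le>n. (\<lambda>k. zs k i j) \<longlonglongrightarrow> z i j"
    have zT: "z \<in> ?T" using plans_closed[of zs m n z] zs lim unfolding P_def by auto
    have "tcost pi m n z \<le> tcost pi m n z'" if "z' \<in> ?T" for z'
      using LIMSEQ_le_const2[OF tcost_cont[OF lim]] zs that unfolding P_def by auto
    with zT show "z \<in> P" unfolding P_def by auto
  next
    fix zs :: "nat \<Rightarrow> nat \<Rightarrow> nat \<Rightarrow> real" and z assume lim: "\<forall>i\<le>m. \<forall>j\<le>n. (\<lambda>k. zs k i j) \<longlonglongrightarrow> z i j"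
    show "(\<lambda>k. ?f (zs k)) \<longlonglongrightarrow> ?f z"
      using lim mn by (intro tendsto_minus tendsto_sum) auto
  qed
  then obtain z where zP: "z \<in> P" and zmax: "\<And>z'. z' \<in> P \<Longrightarrow> (\<Sum>i\<le>m. z' i i) \<le> (\<Sum>i\<le>m. z i i)"
    by force
  have zT: "z \<in> ?T" and zopt: "\<And>z'. z' \<in> ?T \<Longrightarrow> tcost pi m n z \<le> tcost pi m n z'"
    using zP unfolding P_def by auto
  have zr: "\<And>i. i \<le> m \<Longrightarrow> (\<Sum>j\<le>n. z i j) = pi m i"
   and zc: "\<And>j. j \<le> n \<Longrightarrow> (\<Sum>i\<le>m. z i j) = pi n j"
   and zn: "\<And>i j. i \<le> m \<Longrightarrow> j \<le> n \<Longrightarrow> 0 \<le> z i j"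
    using zT unfolding transport_plans_def by auto
  have "z i i = min (pi m i) (pi n i)" if i: "i \<le> m" for i
  proof (rule ccontr)
    assume ne: "z i i \<noteq> min (pi m i) (pi n i)"
    have in_: "i \<le> n" using i mn by simp
    have "z i i \<le> pi m i" unfolding zr[OF i, symmetric]
      by (rule member_le_sum) (use zn i in_ in auto)
    moreover have "z i i \<le> pi n i" unfolding zc[OF in_, symmetric]
      by (rule member_le_sum) (use zn i in_ in auto)
    ultimately have lt1: "z i i < pi m i" and lt2: "z i i < pi n i" using ne by auto
    have "\<exists>j\<in>{..n}-{i}. 0 < z i j"
    proof (rule ccontr)
      assume "\<not> ?thesis"
      then have "(\<Sum>j\<in>{..n}-{i}. z i j) \<le> 0" by (intro sum_nonpos) (fastforce simp: not_less)
      moreover have "(\<Sum>j\<le>n. z i j) = z i i + (\<Sum>j\<in>{..n}-{i}. z i j)"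
        using in_ by (simp add: sum.remove)
      ultimately show False using zr[OF i] lt1 by linarith
    qed
    then obtain j where j: "j \<le> n" "j \<noteq> i" "0 < z i j" by auto
    have "\<exists>k\<in>{..m}-{i}. 0 < z k i"
    proof (rule ccontr)
      assume "\<not> ?thesis"
      then have "(\<Sum>k\<in>{..m}-{i}. z k i) \<le> 0" by (intro sum_nonpos) (fastforce simp: not_less)
      moreover have "(\<Sum>k\<le>m. z k i) = z i i + (\<Sum>k\<in>{..m}-{i}. z k i)"
        using i by (simp add: sum.remove)
      ultimately show False using zc[OF in_] lt2 by linarith
    qed
    then obtain k where k: "k \<le> m" "k \<noteq> i" "0 < z k i" by auto
    define \<epsilon> where "\<epsilon> = min (z i j) (z k i)"
    have ep: "0 < \<epsilon>" "\<epsilon> \<le> z i j" "\<epsilon> \<le> z k i" unfolding \<epsilon>_def using j k by auto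
    define e where "e a b = ind i i a b + ind k j a b - ind i j a b - ind k i a b" for a b
    define z' where "z' a b = z a b + \<epsilon> * e a b" for a b
    have erow: "(\<Sum>b\<le>n. e a b) = 0" for a
      unfolding e_def using in_ j k mn by (simp add: sum.distrib sum_subtractf ind_row)
    have ecol: "(\<Sum>a\<le>m. e a b) = 0" for b
      unfolding e_def using i j k by (simp add: sum.distrib sum_subtractf ind_col)
    have ediag: "(\<Sum>a\<le>m. e a a) = 1 + (if k = j then 1 else 0)"
      unfolding e_def using i j k by (simp add: sum.distrib sum_subtractf ind_diag)
    have ecost: "(\<Sum>a\<le>m. \<Sum>b\<le>n. e a b * dsh pi a b)
        = dsh pi i i + dsh pi k j - dsh pi i j - dsh pi k i"
      unfolding e_def using i in_ j k
      by (simp add: distrib_right left_diff_distrib sum.distrib sum_subtractf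
          ind_cost[of i m i n "dsh pi"] ind_cost[of k m j n "dsh pi"]
          ind_cost[of i m j n "dsh pi"] ind_cost[of k m i n "dsh pi"])
    have z'T: "z' \<in> ?T"
      unfolding transport_plans_def
    proof (intro CollectI conjI allI impI)
      fix a b assume ab: "a \<le> m" "b \<le> n"
      show "0 \<le> z' a b"
        unfolding z'_def e_def ind_def using ab zn[OF ab] ep j k by auto
    next
      fix a assume "a \<le> m"
      then show "(\<Sum>b\<le>n. z' a b) = pi m a"
        unfolding z'_def using zr erow by (simp add: sum.distrib sum_distrib_left[symmetric])
    next
      fix b assume "b \<le> n"
      then show "(\<Sum>a\<le>m. z' a b) = pi n b"
        unfolding z'_def using zc ecol by (simp add: sum.distrib sum_distrib_left[symmetric])
    qed
    have "tcost pi m n z' = tcost pi m n z + \<epsilon> * (\<Sum>a\<le>m. \<Sum>b\<le>n. e a b * dsh pi a b)"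
      unfolding tcost_def z'_def
      by (simp add: distrib_right sum.distrib sum_distrib_left mult.assoc)
    also have "\<dots> \<le> tcost pi m n z"
    proof -
      have "dsh pi k j \<le> dsh pi k i + dsh pi i j" by (rule dsh_tri)
      then have "dsh pi i i + dsh pi k j - dsh pi i j - dsh pi k i \<le> 0"
        using dsh_diag[of i] by simp
      then show ?thesis unfolding ecost using ep(1) by (simp add: mult_nonneg_nonpos)
    qed
    finally have "z' \<in> P" unfolding P_def using z'T zopt by (auto intro: order_trans)
    then have "(\<Sum>a\<le>m. z' a a) \<le> (\<Sum>a\<le>m. z a a)" by (rule zmax)
    moreover have "(\<Sum>a\<le>m. z' a a) = (\<Sum>a\<le>m. z a a) + \<epsilon> * (\<Sum>a\<le>m. e a a)"
      unfolding z'_def by (simp add: sum.distrib sum_distrib_left)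
    ultimately show False using ediag ep(1) by (simp split: if_splits)
  qed
  then show ?thesis using zT zopt by blast
qed

end

theorem proposition1:
  fixes pi :: "nat \<Rightarrow> nat \<Rightarrow> real" and m n :: nat
  assumes nonneg: "\<And>k i. 0 \<le> pi k i"
    and supp: "\<And>k i. k < i \<Longrightarrow> pi k i = 0"
    and total: "\<And>k. (\<Sum>i\<le>k. pi k i) = 1"
    and distinct: "inj pi"
    and mn: "m \<le> n"
  shows "\<exists>z \<in> transport_plans pi m n.
           (\<forall>z' \<in> transport_plans pi m n. tcost pi m n z \<le> tcost pi m n z')
         \<and> (\<forall>i\<le>m. z i i = min (pi m i) (pi n i))"
  by (rule main[OF nonneg total mn])

end
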